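(* Consider an arbitrary sequence of instances $\{\mathcal{I}_N\}$ of the non-binary voting game and an arbitrary sequence of strategy profiles $\{\Sigma_N\}_{N\ge1}$, and let $f^N$ be the excess expected vote share of $\Sigma_N$. (i) If $\liminf_{N\to\infty}\sqrt N f^N=+\infty$, then $\lim_{N\to\infty}A(\Sigma_N)=1$. (ii) If there exist a constant $\eta<0$ and an infinite set $\mathcal{N}\subseteq\mathbb{N}$ such that $\sqrt N f^N\le\eta$ for all $N\in\mathcal{N}$, then there exist constants $N_\eta>0$ and $c>0$ such that $A(\Sigma_N)\le1-c$ for all $N\in\mathcal{N}$ with $N>N_\eta$. (iii) If there exist a constant $\eta\ge0$ and an infinite set $\mathcal{N}\subseteq\mathbb{N}$ such that $\sqrt N f^N\le\eta$ for all $N\in\mathcal{N}$, and a constant $\psi>0$ such that $\mathrm{Var}(\sum_{n=1}^NX_n^N\mid W=w)\ge\psi N$ for all $N\in\mathcal{N}$ and all states $w$, then there exist constants $N_\eta>0$ and $c>0$ such that $A(\Sigma_N)\le1-c$ for all $N\in\mathcal{N}$ with $N>N_\eta$.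
   Context: Non-binary voting game. $N$ agents each vote for $\mathbf{A}$ or $\mathbf{R}$. World state $W\in\{1,\dots,\mathcal{W}\}$ (unobserved), prior $P_w>0$. Conditional on $W$, each agent independently receives a signal $S_n\in\{1,\dots,M\}$ with $P_{mw}=\Pr[S_n=m\mid W=w]$, satisfying stochastic dominance. Threshold $\mu\in(0,1)$: $\mathbf{A}$ wins iff at least $\mu N$ agents vote $\mathbf{A}$, else $\mathbf{R}$. Agents have utilities $v_n$ on states $\times\{\mathbf{A},\mathbf{R}\}$ with values in $\{0,\dots,B\}$, $v_n(w,\mathbf{A})$ strictly increasing, $v_n(w,\mathbf{R})$ strictly decreasing in $w$. Constants $\alpha^{\mathbf{A}}_w$, $\alpha^{\mathbf{R}}_w=1-\alpha^{\mathbf{A}}_w$ independent of $N$: exactly $\lfloor\alpha^{\mathbf{R}}_wN\rfloor$ agents prefer $\mathbf{R}$ in state $w$; $\alpha^{\mathbf{A}}_w\ne\mu$. Informed majority decision in $w$: $\mathbf{A}$ if $\alpha^{\mathbf{A}}_w>\mu$, else $\mathbf{R}$. $\mathcal{L}=\{w:\alpha^{\mathbf{A}}_w<\mu\}$, $\mathcal{H}=\{w:\alpha^{\mathbf{A}}_w>\mu\}$, both nonempty. A sequence of instances: $\mathcal{I}_N$ has $N$ agents, all share $\mu$, $(P_w)$, $(P_{mw})$, $(\alpha^{\mathbf{A}}_w)$; utilities arbitrary. Strategy $(\beta_1,\dots,\beta_M)$: probability of voting $\mathbf{A}$ on each signal. $\lambda^{\mathbf{X}}_w(\Sigma)$: ex-ante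 probability that $\mathbf{X}$ wins in state $w$. Fidelity $A(\Sigma)=\sum_{w\in\mathcal{L}}P_w\lambda^{\mathbf{R}}_w(\Sigma)+\sum_{w\in\mathcal{H}}P_w\lambda^{\mathbf{A}}_w(\Sigma)$. For $\Sigma_N$, $X_n^N=1$ if agent $n$ votes $\mathbf{A}$, $0$ otherwise; $f^N_{w\mathbf{A}}=\frac1N\sum_nE[X_n^N\mid W=w]-\mu$, $f^N_{w\mathbf{R}}=\frac1N\sum_nE[1-X_n^N\mid W=w]-(1-\mu)$, and $f^N=\min\big(\min_{w\in\mathcal{H}}f^N_{w\mathbf{A}},\min_{w\in\mathcal{L}}f^N_{w\mathbf{R}}\big)$. *)

theory Defs
  imports "HOL-Probability.Probability"
begin

text \<open>States are 1..K, signals are 1..M, agents of instance N are 1..N.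
  sig w : distribution of a signal given W = w (so pmf (sig w) m = P_{mw}).
  b n m : probability that agent n votes A upon signal m (strategy profile).
  A vote profile is a function x :: nat => bool (x n = True iff agent n votes A).\<close>

definition stoch_dom :: "nat \<Rightarrow> (nat \<Rightarrow> nat pmf) \<Rightarrow> bool" where
  "stoch_dom K sig \<longleftrightarrow>
     (\<forall>w\<in>{1..K}. \<forall>w'\<in>{1..K}. \<forall>k. w \<le> w' \<longrightarrow>
        measure_pmf.prob (sig w) {m. k \<le> m} \<le> measure_pmf.prob (sig w') {m. k \<le> m})"

definition votes :: "(nat \<Rightarrow> nat pmf) \<Rightarrow> (nat \<Rightarrow> nat \<Rightarrow> real) \<Rightarrow> nat \<Rightarrow> nat \<Rightarrow> (nat \<Rightarrow> bool) pmf" where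
  "votes sig b N w = Pi_pmf {1..N} False (\<lambda>n. sig w \<bind> (\<lambda>m. bernoulli_pmf (b n m)))"

definition numA :: "nat \<Rightarrow> (nat \<Rightarrow> bool) \<Rightarrow> nat" where
  "numA N x = card {n\<in>{1..N}. x n}"

definition lamA :: "(nat \<Rightarrow> nat pmf) \<Rightarrow> (nat \<Rightarrow> nat \<Rightarrow> real) \<Rightarrow> real \<Rightarrow> nat \<Rightarrow> nat \<Rightarrow> real" where
  "lamA sig b mu N w = measure_pmf.prob (votes sig b N w) {x. mu * real N \<le> real (numA N x)}"

definition lamR :: "(nat \<Rightarrow> nat pmf) \<Rightarrow> (nat \<Rightarrow> nat \<Rightarrow> real) \<Rightarrow> real \<Rightarrow> nat \<Rightarrow> nat \<Rightarrow> real" where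
  "lamR sig b mu N w = measure_pmf.prob (votes sig b N w) {x. \<not> (mu * real N \<le> real (numA N x))}"

definition Lset :: "nat \<Rightarrow> (nat \<Rightarrow> real) \<Rightarrow> real \<Rightarrow> nat set" where
  "Lset K alphaA mu = {w\<in>{1..K}. alphaA w < mu}"

definition Hset :: "nat \<Rightarrow> (nat \<Rightarrow> real) \<Rightarrow> real \<Rightarrow> nat set" where
  "Hset K alphaA mu = {w\<in>{1..K}. alphaA w > mu}"

definition fidelity :: "nat pmf \<Rightarrow> (nat \<Rightarrow> nat pmf) \<Rightarrow> (nat \<Rightarrow> nat \<Rightarrow> real) \<Rightarrow> real \<Rightarrow> (nat \<Rightarrow> real) \<Rightarrow> nat \<Rightarrow> nat \<Rightarrow> real" where
  "fidelity prior sig b mu alphaA K N =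
     (\<Sum>w\<in>Lset K alphaA mu. pmf prior w * lamR sig b mu N w) +
     (\<Sum>w\<in>Hset K alphaA mu. pmf prior w * lamA sig b mu N w)"

definition fA :: "(nat \<Rightarrow> nat pmf) \<Rightarrow> (nat \<Rightarrow> nat \<Rightarrow> real) \<Rightarrow> real \<Rightarrow> nat \<Rightarrow> nat \<Rightarrow> real" where
  "fA sig b mu N w =
     (1 / real N) * (\<Sum>n\<in>{1..N}. measure_pmf.expectation (votes sig b N w) (\<lambda>x. if x n then 1 else 0)) - mu"

definition fR :: "(nat \<Rightarrow> nat pmf) \<Rightarrow> (nat \<Rightarrow> nat \<Rightarrow> real) \<Rightarrow> real \<Rightarrow> nat \<Rightarrow> nat \<Rightarrow> real" where
  "fR sig b mu N w =
     (1 / real N) * (\<Sum>n\<in>{1..N}. measure_pmf.expectation (votes sig b N w) (\<lambda>x. 1 - (if x n then 1 else 0))) - (1 - mu)"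

definition excess :: "(nat \<Rightarrow> nat pmf) \<Rightarrow> (nat \<Rightarrow> nat \<Rightarrow> real) \<Rightarrow> real \<Rightarrow> (nat \<Rightarrow> real) \<Rightarrow> nat \<Rightarrow> nat \<Rightarrow> real" where
  "excess sig b mu alphaA K N =
     min (Min ((\<lambda>w. fA sig b mu N w) ` Hset K alphaA mu))
         (Min ((\<lambda>w. fR sig b mu N w) ` Lset K alphaA mu))"

definition vote_var :: "(nat \<Rightarrow> nat pmf) \<Rightarrow> (nat \<Rightarrow> nat \<Rightarrow> real) \<Rightarrow> nat \<Rightarrow> nat \<Rightarrow> real" where
  "vote_var sig b N w = measure_pmf.variance (votes sig b N w) (\<lambda>x. real (numA N x))"

end

theory Submission
  imports Defs "HOL-Real_Asymp.Real_Asymp"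
begin

lemma exp_taylor3:
  fixes x :: real assumes "\<bar>x\<bar> \<le> 1"
  shows "\<bar>exp x - (1 + x + x\<^sup>2/2)\<bar> \<le> \<bar>x\<bar>^3 / 2"
proof -
  obtain t where t: "\<bar>t\<bar> \<le> \<bar>x\<bar>" "exp x = (\<Sum>m<3. (x ^ m) / fact m) + (exp t / fact 3) * x ^ 3"
    using Maclaurin_exp_le by blast
  have s: "(\<Sum>m<3. (x ^ m) / fact m) = 1 + x + x\<^sup>2/2"
    by (simp add: eval_nat_numeral fact_numeral power2_eq_square)
  have "exp t \<le> exp 1" using t(1) assms by simp
  also have "\<dots> \<le> 3" using exp_le by simp
  finally have et: "exp t \<le> 3" .
  have "\<bar>exp x - (1 + x + x\<^sup>2/2)\<bar> = exp t / 6 * \<bar>x\<bar>^3"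
    using t s by (simp add: fact_numeral abs_mult power_abs)
  also have "\<dots> \<le> 3 / 6 * \<bar>x\<bar>^3"
    by (intro mult_right_mono divide_right_mono et) auto
  finally show ?thesis by simp
qed

lemma exp_up: fixes x :: real assumes "\<bar>x\<bar> \<le> 1" shows "exp x \<le> 1 + x + x\<^sup>2"
proof -
  have e: "\<bar>x\<bar>^3 = \<bar>x\<bar> * x\<^sup>2" by (simp add: power3_eq_cube power2_eq_square abs_mult_self_eq)
  have "\<bar>x\<bar> * x\<^sup>2 \<le> 1 * x\<^sup>2" by (rule mult_right_mono) (use assms in auto)
  then have "\<bar>x\<bar>^3 \<le> x\<^sup>2" using e by simp
  then show ?thesis using exp_taylor3[OF assms] by linarith
qed

lemma exp_low: fixes x :: real assumes "\<bar>x\<bar> \<le> 1/2" shows "1 + x + x\<^sup>2/4 \<le> exp x"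
proof -
  have e: "\<bar>x\<bar>^3 = \<bar>x\<bar> * x\<^sup>2" by (simp add: power3_eq_cube power2_eq_square abs_mult_self_eq)
  have "\<bar>x\<bar> * x\<^sup>2 \<le> (1/2) * x\<^sup>2" by (rule mult_right_mono) (use assms in auto)
  then have "\<bar>x\<bar>^3 \<le> x\<^sup>2 / 2" using e by simp
  then show ?thesis using exp_taylor3[of x] assms by linarith
qed

lemma E_bool: "measure_pmf.expectation (q::bool pmf) f = pmf q True * f True + (1 - pmf q True) * f False"
proof -
  have s: "pmf q True + pmf q False = 1"
  proof -
    have "sum (pmf q) UNIV = 1" by (rule sum_pmf_eq_1) auto
    then show ?thesis by (simp add: UNIV_bool add.commute)
  qed
  have "measure_pmf.expectation q f = (\<Sum>a\<in>UNIV. f a * pmf q a)"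
    by (rule integral_measure_pmf_real) auto
  also have "\<dots> = f True * pmf q True + f False * pmf q False" by (simp add: UNIV_bool)
  finally show ?thesis using s by (simp add: algebra_simps flip: distrib_left)
qed

lemma pmf_bool_range: "0 \<le> pmf (q::bool pmf) True \<and> pmf q True \<le> 1"
  by (simp add: pmf_le_1)

lemma fin_Pi: "finite I \<Longrightarrow> finite (set_pmf (Pi_pmf I (d::bool) (q :: 'i \<Rightarrow> bool pmf)))"
  by (auto simp: set_Pi_pmf intro!: finite_PiE_dflt)

lemma integ_Pi: "finite I \<Longrightarrow> integrable (measure_pmf (Pi_pmf I (d::bool) (q :: 'i \<Rightarrow> bool pmf))) (f :: _ \<Rightarrow> real)"
  by (rule integrable_measure_pmf_finite, rule fin_Pi)

lemma integ_bool: "integrable (measure_pmf (q::bool pmf)) (f :: _ \<Rightarrow> real)"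
  by (rule integrable_measure_pmf_finite) auto

lemma E_coord:
  assumes "finite I" "i \<in> I"
  shows "measure_pmf.expectation (Pi_pmf I (d::bool) q) (\<lambda>x. (f::bool\<Rightarrow>real) (x i)) = measure_pmf.expectation (q i) f"
proof -
  have "measure_pmf.expectation (q i) f = measure_pmf.expectation (map_pmf (\<lambda>x. x i) (Pi_pmf I d q)) f"
    using Pi_pmf_component[OF assms(1), of i d q] assms(2) by simp
  then show ?thesis by simp
qed

lemma mgf_prod:
  fixes g :: "'i \<Rightarrow> bool \<Rightarrow> real"
  assumes "finite I"
  shows "measure_pmf.expectation (Pi_pmf I (d::bool) q) (\<lambda>x. exp (t * (\<Sum>i\<in>I. g i (x i))))
       = (\<Prod>i\<in>I. measure_pmf.expectation (q i) (\<lambda>b. exp (t * g i b)))"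
proof -
  have "(\<lambda>x. exp (t * (\<Sum>i\<in>I. g i (x i)))) = (\<lambda>x. \<Prod>i\<in>I. (\<lambda>i b. exp (t * g i b)) i (x i))"
    using assms by (simp add: sum_distrib_left exp_sum)
  then show ?thesis
    using expectation_prod_Pi_pmf[OF assms integ_bool, where f="\<lambda>i b. exp (t * g i b)" and dflt=d and p=q] by simp
qed

lemma factor_up:
  fixes q :: "bool pmf" and g :: "bool \<Rightarrow> real"
  assumes "measure_pmf.expectation q g = 0" "\<And>b. \<bar>g b\<bar> \<le> 1" "\<bar>t\<bar> \<le> 1"
  shows "measure_pmf.expectation q (\<lambda>b. exp (t * g b)) \<le> exp (t\<^sup>2 * measure_pmf.expectation q (\<lambda>b. (g b)\<^sup>2))"
proof -
  define p where "p = pmf q True"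
  have p: "0 \<le> p" "p \<le> 1" using pmf_bool_range p_def by auto
  have m: "p * g True + (1 - p) * g False = 0" using assms(1) by (simp add: E_bool p_def)
  have b1: "\<bar>t * g b\<bar> \<le> 1" for b using assms(2)[of b] assms(3)
    by (simp add: abs_mult mult_le_one)
  have "measure_pmf.expectation q (\<lambda>b. exp (t * g b)) = p * exp (t * g True) + (1-p) * exp (t * g False)"
    by (simp add: E_bool p_def)
  also have "\<dots> \<le> p * (1 + t * g True + (t * g True)\<^sup>2) + (1-p) * (1 + t * g False + (t * g False)\<^sup>2)"
    by (intro add_mono mult_left_mono exp_up b1) (use p in auto)
  also have "\<dots> = 1 + t * (p * g True + (1 - p) * g False) + t\<^sup>2 * (p * (g True)\<^sup>2 + (1-p) * (g False)\<^sup>2)"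
    by (simp add: algebra_simps power2_eq_square)
  also have "\<dots> = 1 + t\<^sup>2 * (p * (g True)\<^sup>2 + (1-p) * (g False)\<^sup>2)"
    using m by simp
  also have "\<dots> \<le> exp (t\<^sup>2 * (p * (g True)\<^sup>2 + (1-p) * (g False)\<^sup>2))" by (rule exp_ge_add_one_self)
  also have "p * (g True)\<^sup>2 + (1-p) * (g False)\<^sup>2 = measure_pmf.expectation q (\<lambda>b. (g b)\<^sup>2)"
    by (simp add: E_bool p_def)
  finally show ?thesis .
qed

lemma factor_low:
  fixes q :: "bool pmf" and g :: "bool \<Rightarrow> real"
  assumes "measure_pmf.expectation q g = 0" "\<And>b. \<bar>g b\<bar> \<le> 1" "\<bar>t\<bar> \<le> 1/2"
  shows "exp (t\<^sup>2 * measure_pmf.expectation q (\<lambda>b. (g b)\<^sup>2) / 8) \<le> measure_pmf.expectation q (\<lambda>b. exp (t * g b))"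
proof -
  define p where "p = pmf q True"
  have p: "0 \<le> p" "p \<le> 1" using pmf_bool_range p_def by auto
  have m: "p * g True + (1 - p) * g False = 0" using assms(1) by (simp add: E_bool p_def)
  have b1: "\<bar>t * g b\<bar> \<le> 1/2" for b
  proof -
    have "\<bar>t\<bar> * \<bar>g b\<bar> \<le> \<bar>t\<bar> * 1" by (rule mult_left_mono) (use assms(2)[of b] in auto)
    then show ?thesis using assms(3) by (simp add: abs_mult)
  qed
  define v where "v = p * (g True)\<^sup>2 + (1-p) * (g False)\<^sup>2"
  have v: "0 \<le> v" "v \<le> 1"
  proof -
    have "(g b)\<^sup>2 \<le> 1" for b using assms(2)[of b] by (simp add: abs_square_le_1)
    then show "0 \<le> v" unfolding v_def using p
      by (auto intro!: add_nonneg_nonneg mult_nonneg_nonneg)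
    have "v \<le> p * 1 + (1 - p) * 1" unfolding v_def
      by (intro add_mono mult_left_mono) (use p \<open>\<And>b. (g b)\<^sup>2 \<le> 1\<close> in auto)
    then show "v \<le> 1" by simp
  qed
  have t2: "t\<^sup>2 \<le> 1" using assms(3) by (simp add: abs_square_le_1)
  have tv: "0 \<le> t\<^sup>2 * v / 4" "t\<^sup>2 * v / 4 \<le> 1" using v t2 mult_le_one[of "t^2" v] by auto
  have "exp (t\<^sup>2 * v / 8) = exp ((t\<^sup>2 * v / 4) / 2)" by simp
  also have "\<dots> \<le> 1 + t\<^sup>2 * v / 4"
  proof -
    have "exp ((t\<^sup>2 * v / 4) / 2) \<le> 1 + (t\<^sup>2 * v / 4) / 2 + ((t\<^sup>2 * v / 4) / 2)\<^sup>2"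
      by (rule exp_bound) (use tv in auto)
    also have "\<dots> \<le> 1 + t\<^sup>2 * v / 4"
    proof -
      have "(t\<^sup>2 * v / 4 / 2) * (t\<^sup>2 * v / 4 / 2) \<le> (t\<^sup>2 * v / 4 / 2) * 1"
        by (rule mult_left_mono) (use tv in auto)
      then show ?thesis by (simp add: power2_eq_square)
    qed
    finally show ?thesis .
  qed
  also have "\<dots> = 1 + t * (p * g True + (1 - p) * g False) + t\<^sup>2 * v / 4"
    using m by simp
  also have "\<dots> = p * (1 + t * g True + (t * g True)\<^sup>2/4) + (1-p) * (1 + t * g False + (t * g False)\<^sup>2/4)"
    unfolding v_def power2_eq_square by (simp add: field_simps)
  also have "\<dots> \<le> p * exp (t * g True) + (1-p) * exp (t * g False)"
    by (intro add_mono mult_left_mono exp_low b1) (use p in auto)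
  also have "\<dots> = measure_pmf.expectation q (\<lambda>b. exp (t * g b))"
    by (simp add: E_bool p_def)
  finally show ?thesis by (simp add: v_def E_bool p_def)
qed

lemma factor_ge1:
  fixes q :: "bool pmf" and g :: "bool \<Rightarrow> real"
  assumes "measure_pmf.expectation q g = 0"
  shows "1 \<le> measure_pmf.expectation q (\<lambda>b. exp (t * g b))"
proof -
  define p where "p = pmf q True"
  have p: "0 \<le> p" "p \<le> 1" using pmf_bool_range p_def by auto
  have m: "p * g True + (1 - p) * g False = 0" using assms(1) by (simp add: E_bool p_def)
  have "1 = p * (1 + t * g True) + (1-p) * (1 + t * g False)" using m by (simp add: algebra_simps)
      (metis distrib_left mult.commute mult.left_commute mult_zero_right)
  also have "\<dots> \<le> p * exp (t * g True) + (1-p) * exp (t * g False)"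
    by (intro add_mono mult_left_mono exp_ge_add_one_self) (use p in auto)
  finally show ?thesis by (simp add: E_bool p_def)
qed

lemma prob_as_E: "measure_pmf.prob M A = measure_pmf.expectation M (indicator A :: _ \<Rightarrow> real)"
  by simp

locale cen =
  fixes I :: "nat set" and q :: "nat \<Rightarrow> bool pmf" and g :: "nat \<Rightarrow> bool \<Rightarrow> real"
  assumes finI: "finite I"
    and g0: "\<And>i. i \<in> I \<Longrightarrow> measure_pmf.expectation (q i) (g i) = 0"
    and gb: "\<And>i b. i \<in> I \<Longrightarrow> \<bar>g i b\<bar> \<le> 1"
begin

definition "Q = Pi_pmf I False q"
definition "Z x = (\<Sum>i\<in>I. g i (x i))"
definition "V = (\<Sum>i\<in>I. measure_pmf.expectation (q i) (\<lambda>b. (g i b)\<^sup>2))"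

lemma integQ: "integrable (measure_pmf Q) (f :: _ \<Rightarrow> real)"
  unfolding Q_def by (rule integ_Pi[OF finI])

lemma mgfQ: "measure_pmf.expectation Q (\<lambda>x. exp (t * Z x)) = (\<Prod>i\<in>I. measure_pmf.expectation (q i) (\<lambda>b. exp (t * g i b)))"
  unfolding Q_def Z_def by (rule mgf_prod[OF finI])

lemma mgf_ge1: "1 \<le> measure_pmf.expectation Q (\<lambda>x. exp (t * Z x))"
  unfolding mgfQ by (intro prod_ge_1 conjI factor_ge1 g0) (auto intro: order_trans[OF _ factor_ge1[OF g0]])

lemma mgf_up: assumes "\<bar>t\<bar> \<le> 1" shows "measure_pmf.expectation Q (\<lambda>x. exp (t * Z x)) \<le> exp (t\<^sup>2 * V)"
proof -
  have "(\<Prod>i\<in>I. measure_pmf.expectation (q i) (\<lambda>b. exp (t * g i b)))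
      \<le> (\<Prod>i\<in>I. exp (t\<^sup>2 * measure_pmf.expectation (q i) (\<lambda>b. (g i b)\<^sup>2)))"
    by (intro prod_mono conjI factor_up g0 gb assms) (auto intro: order_trans[OF _ factor_ge1[OF g0]])
  also have "\<dots> = exp (t\<^sup>2 * V)" unfolding V_def using finI by (simp add: exp_sum sum_distrib_left)
  finally show ?thesis unfolding mgfQ .
qed

lemma mgf_low: assumes "\<bar>t\<bar> \<le> 1/2" shows "exp (t\<^sup>2 * V / 8) \<le> measure_pmf.expectation Q (\<lambda>x. exp (t * Z x))"
proof -
  have "exp (t\<^sup>2 * V / 8) = (\<Prod>i\<in>I. exp (t\<^sup>2 * measure_pmf.expectation (q i) (\<lambda>b. (g i b)\<^sup>2) / 8))"
    unfolding V_def using finI by (simp add: exp_sum sum_distrib_left sum_divide_distrib)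
  also have "\<dots> \<le> (\<Prod>i\<in>I. measure_pmf.expectation (q i) (\<lambda>b. exp (t * g i b)))"
    by (intro prod_mono conjI factor_low g0 gb assms) auto
  finally show ?thesis unfolding mgfQ .
qed

lemma V_bounds: "0 \<le> V" "V \<le> real (card I)"
proof -
  have v: "0 \<le> measure_pmf.expectation (q i) (\<lambda>b. (g i b)\<^sup>2) \<and> measure_pmf.expectation (q i) (\<lambda>b. (g i b)\<^sup>2) \<le> 1"
    if "i \<in> I" for i
  proof -
    have "(g i b)\<^sup>2 \<le> 1" for b using gb[OF that, of b] by (simp add: abs_square_le_1)
    moreover have "0 \<le> pmf (q i) True" "pmf (q i) True \<le> 1" using pmf_bool_range[of "q i"] by auto
    ultimately have "pmf (q i) True * (g i True)\<^sup>2 + (1 - pmf (q i) True) * (g i False)\<^sup>2 \<le> pmf (q i) True * 1 + (1 - pmf (q i) True) * 1"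
      by (intro add_mono mult_left_mono) auto
    then show ?thesis using \<open>0 \<le> pmf (q i) True\<close> \<open>pmf (q i) True \<le> 1\<close>
      by (simp add: E_bool)
  qed
  show "0 \<le> V" unfolding V_def using v by (simp add: sum_nonneg)
  have "V \<le> (\<Sum>i\<in>I. 1)" unfolding V_def using v by (intro sum_mono) auto
  then show "V \<le> real (card I)" by simp
qed

lemma tail: assumes "0 \<le> t" "t \<le> 1"
  shows "measure_pmf.prob Q {x. a \<le> Z x} \<le> exp (t\<^sup>2 * V - t * a)"
proof -
  have "measure_pmf.prob Q {x. a \<le> Z x} = measure_pmf.expectation Q (indicator {x. a \<le> Z x})"
    by simp
  also have "\<dots> \<le> measure_pmf.expectation Q (\<lambda>x. exp (- t * a) * exp (t * Z x))"
  proof (intro integral_mono integQ)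
    fix x
    show "indicator {x. a \<le> Z x} x \<le> exp (- t * a) * exp (t * Z x)"
    proof (cases "a \<le> Z x")
      case True
      then have "0 \<le> t * Z x - t * a" using assms by (simp add: right_diff_distrib[symmetric])
      then have "1 \<le> exp (t * Z x - t * a)" by simp
      then show ?thesis using True by (simp add: exp_diff[symmetric] mult.commute exp_add[symmetric])
    qed auto
  qed
  also have "\<dots> = exp (- t * a) * measure_pmf.expectation Q (\<lambda>x. exp (t * Z x))" by simp
  also have "\<dots> \<le> exp (- t * a) * exp (t\<^sup>2 * V)"
    by (intro mult_left_mono mgf_up) (use assms in auto)
  also have "\<dots> = exp (t\<^sup>2 * V - t * a)" by (simp add: exp_add[symmetric])
  finally show ?thesis .
qed

end

context cen begin

lemma E_single: "i \<in> I \<Longrightarrow> measure_pmf.expectation Q (\<lambda>x. (f::bool\<Rightarrow>real) (x i)) = measure_pmf.expectation (q i) f"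
  unfolding Q_def by (rule E_coord[OF finI])

lemma E_pair: assumes "i \<in> I" "j \<in> I" "i \<noteq> j"
  shows "measure_pmf.expectation Q (\<lambda>x. g i (x i) * g j (x j)) = 0"
proof -
  define f where "f k b = (if k = i then g i b + 1 else if k = j then g j b + 1 else 1)" for k b
  have fnn: "0 \<le> f k b" if "k \<in> I" for k b using gb[OF that, of b] unfolding f_def by auto
  have pr: "(\<Prod>k\<in>I. f k (x k)) = (g i (x i) + 1) * (g j (x j) + 1)" for x
  proof -
    have "(\<Prod>k\<in>I. f k (x k)) = f i (x i) * (\<Prod>k\<in>I - {i}. f k (x k))"
      using finI assms by (simp add: prod.remove)
    also have "(\<Prod>k\<in>I - {i}. f k (x k)) = f j (x j) * (\<Prod>k\<in>I - {i} - {j}. f k (x k))"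
      by (rule prod.remove) (use finI assms in auto)
    also have "(\<Prod>k\<in>I - {i} - {j}. f k (x k)) = 1" by (intro prod.neutral) (auto simp: f_def)
    finally show ?thesis using assms by (simp add: f_def)
  qed
  have "measure_pmf.expectation Q (\<lambda>x. \<Prod>k\<in>I. f k (x k)) = (\<Prod>k\<in>I. measure_pmf.expectation (q k) (f k))"
    unfolding Q_def by (rule expectation_prod_Pi_pmf[OF finI integ_bool]) (auto intro: fnn)
  also have "\<dots> = 1"
  proof (intro prod.neutral ballI)
    fix k assume k: "k \<in> I"
    have "measure_pmf.expectation (q k) (\<lambda>b. g k b + 1) = 1"
      using g0[OF k] by (simp add: E_bool algebra_simps)
    then show "measure_pmf.expectation (q k) (f k) = 1" unfolding f_def
      using assms by (cases "k = i"; cases "k = j") (auto simp: E_bool)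
  qed
  finally have "measure_pmf.expectation Q (\<lambda>x. (g i (x i) + 1) * (g j (x j) + 1)) = 1" by (simp add: pr)
  moreover have "measure_pmf.expectation Q (\<lambda>x. (g i (x i) + 1) * (g j (x j) + 1))
     = measure_pmf.expectation Q (\<lambda>x. g i (x i) * g j (x j)) + measure_pmf.expectation Q (\<lambda>x. g i (x i))
       + measure_pmf.expectation Q (\<lambda>x. g j (x j)) + 1"
    by (simp add: algebra_simps integQ)
  moreover have "measure_pmf.expectation Q (\<lambda>x. g i (x i)) = 0" using E_single[OF assms(1)] g0[OF assms(1)] by simp
  moreover have "measure_pmf.expectation Q (\<lambda>x. g j (x j)) = 0" using E_single[OF assms(2)] g0[OF assms(2)] by simp
  ultimately show ?thesis by simp
qed

lemma E_Z: "measure_pmf.expectation Q Z = 0"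
proof -
  have "measure_pmf.expectation Q Z = (\<Sum>i\<in>I. measure_pmf.expectation Q (\<lambda>x. g i (x i)))"
    unfolding Z_def by (rule Bochner_Integration.integral_sum) (rule integQ)
  also have "\<dots> = 0" by (intro sum.neutral ballI) (simp add: E_single g0)
  finally show ?thesis .
qed

lemma E_Z2: "measure_pmf.expectation Q (\<lambda>x. (Z x)\<^sup>2) = V"
proof -
  have "(\<lambda>x. (Z x)\<^sup>2) = (\<lambda>x. \<Sum>i\<in>I. \<Sum>j\<in>I. g i (x i) * g j (x j))"
    unfolding Z_def by (simp add: power2_eq_square sum_product)
  then have "measure_pmf.expectation Q (\<lambda>x. (Z x)\<^sup>2) = (\<Sum>i\<in>I. \<Sum>j\<in>I. measure_pmf.expectation Q (\<lambda>x. g i (x i) * g j (x j)))"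
    by (simp add: Bochner_Integration.integral_sum integQ)
  also have "\<dots> = (\<Sum>i\<in>I. measure_pmf.expectation Q (\<lambda>x. g i (x i) * g i (x i)))"
  proof (intro sum.cong refl)
    fix i assume i: "i \<in> I"
    have "(\<Sum>j\<in>I. measure_pmf.expectation Q (\<lambda>x. g i (x i) * g j (x j)))
        = measure_pmf.expectation Q (\<lambda>x. g i (x i) * g i (x i)) + (\<Sum>j\<in>I - {i}. measure_pmf.expectation Q (\<lambda>x. g i (x i) * g j (x j)))"
      using finI i by (simp add: sum.remove)
    also have "(\<Sum>j\<in>I - {i}. measure_pmf.expectation Q (\<lambda>x. g i (x i) * g j (x j))) = 0"
      by (intro sum.neutral ballI) (use i in \<open>auto intro: E_pair\<close>)
    finally show "(\<Sum>j\<in>I. measure_pmf.expectation Q (\<lambda>x. g i (x i) * g j (x j))) = measure_pmf.expectation Q (\<lambda>x. g i (x i) * g i (x i))" by simp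
  qed
  also have "\<dots> = V" unfolding V_def
    by (intro sum.cong refl) (simp add: E_single[where f="\<lambda>b. g _ b * g _ b"] power2_eq_square)
  finally show ?thesis .
qed

lemma PZ:
  assumes Ynn: "\<And>x. 0 \<le> Y x" and t: "0 < t"
  shows "measure_pmf.expectation Q Y \<le> measure_pmf.expectation Q Y / 2 + measure_pmf.expectation Q (\<lambda>x. (Y x)\<^sup>2) / (2 * t)
          + t / 2 * measure_pmf.prob Q {x. measure_pmf.expectation Q Y / 2 < Y x}"
proof -
  define m where "m = measure_pmf.expectation Q Y"
  have m0: "0 \<le> m" unfolding m_def by (rule Bochner_Integration.integral_nonneg) (rule Ynn)
  have pw: "Y x \<le> m / 2 + (Y x)\<^sup>2 / (2 * t) + t / 2 * indicator {x. m / 2 < Y x} x" for x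
  proof (cases "m / 2 < Y x")
    case True
    have "0 \<le> (Y x - t)\<^sup>2" by simp
    then have "2 * t * Y x \<le> (Y x)\<^sup>2 + t\<^sup>2" by (simp add: power2_diff algebra_simps)
    then have "Y x \<le> (Y x)\<^sup>2 / (2 * t) + t / 2" using t
      by (simp add: field_simps power2_eq_square)
    then show ?thesis using True m0 by simp
  next
    case False
    have h1: "Y x \<le> m / 2" using False by simp
    have h2: "0 \<le> (Y x)\<^sup>2 / (2 * t)" using t by simp
    have h3: "t / 2 * indicator {x. m / 2 < Y x} x = (0::real)" using False by simp
    show ?thesis using h1 h2 h3 by linarith
  qed
  have "m \<le> measure_pmf.expectation Q (\<lambda>x. m / 2 + (Y x)\<^sup>2 / (2 * t) + t / 2 * indicator {x. m / 2 < Y x} x)"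
    unfolding m_def by (intro integral_mono integQ) (use pw m_def in auto)
  also have "\<dots> = m / 2 + measure_pmf.expectation Q (\<lambda>x. (Y x)\<^sup>2) / (2 * t) + t / 2 * measure_pmf.prob Q {x. m / 2 < Y x}"
    by (simp add: integQ)
  finally show ?thesis unfolding m_def .
qed

end

context cen begin

lemma anti:
  assumes k: "0 \<le> k" and V: "4 * (8 * k + 8)\<^sup>2 \<le> V"
  shows "exp (- 4 * (8 * k + 8)\<^sup>2) / 4 \<le> measure_pmf.prob Q {x. k * sqrt V \<le> Z x}"
proof -
  define \<beta> where "\<beta> = 8 * k + 8"
  have \<beta>: "8 \<le> \<beta>" using k \<beta>_def by simp
  define s where "s = sqrt V"
  have "0 < 4 * (8 * k + 8)\<^sup>2" using k by simp
  then have Vpos: "0 < V" using V by linarith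
  have s: "0 < s" "s\<^sup>2 = V" using Vpos s_def by auto
  define l where "l = \<beta> / s"
  have l0: "0 < l" using \<beta> s l_def by simp
  have V': "4 * \<beta>\<^sup>2 \<le> V" using V \<beta>_def by simp
  have "(2 * \<beta>)\<^sup>2 = 4 * \<beta>\<^sup>2" by (simp add: power_mult_distrib)
  then have "(2 * \<beta>)\<^sup>2 \<le> s\<^sup>2" using V' s(2) by linarith
  then have "2 * \<beta> \<le> s" by (rule power2_le_imp_le) (use s in auto)
  then have "\<beta> / s \<le> 1/2" using s(1) by (simp add: divide_le_eq)
  then have l2: "l \<le> 1/2" using l_def by simp
  have lV: "l\<^sup>2 * V = \<beta>\<^sup>2" using s l_def Vpos by (simp add: power_divide)
  define U where "U x = exp (l * Z x)" for x
  define m where "m = measure_pmf.expectation Q U"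
  define Q2 where "Q2 = measure_pmf.expectation Q (\<lambda>x. (U x)\<^sup>2)"
  have m_low: "exp (\<beta>\<^sup>2 / 8) \<le> m" using mgf_low[of l] l0 l2 lV unfolding m_def U_def by simp
  have m1: "1 \<le> m" using mgf_ge1 unfolding m_def U_def .
  have U2: "(U x)\<^sup>2 = exp ((2 * l) * Z x)" for x unfolding U_def
    by (simp add: power2_eq_square exp_add[symmetric])
  have e4: "(2 * l)\<^sup>2 * V = 4 * \<beta>\<^sup>2" using lV by (simp add: power_mult_distrib mult.assoc)
  have Q2_up: "Q2 \<le> exp (4 * \<beta>\<^sup>2)" using mgf_up[of "2 * l"] l0 l2 unfolding Q2_def U2 e4
    by simp
  have Q21: "1 \<le> Q2" using mgf_ge1[of "2 * l"] unfolding Q2_def U2 .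
  define P where "P = measure_pmf.prob Q {x. m / 2 < U x}"
  define t where "t = 2 * Q2 / m"
  have t: "0 < t" using Q21 m1 t_def by simp
  have "m \<le> m / 2 + Q2 / (2 * t) + t / 2 * P"
    using PZ[of U t] t unfolding m_def Q2_def P_def U_def by simp
  also have "Q2 / (2 * t) = m / 4" unfolding t_def using Q21 m1 by (simp add: field_simps)
  also have "t / 2 * P = Q2 / m * P" using t_def by simp
  finally have "m / 4 \<le> Q2 / m * P" by linarith
  then have "m * m / 4 \<le> Q2 * P" using m1 by (simp add: field_simps)
  moreover have "1 \<le> m * m" using mult_mono[OF m1 m1] m1 by simp
  ultimately have "1 / 4 \<le> Q2 * P" by simp
  then have PQ: "1 / (4 * Q2) \<le> P" using Q21 by (simp add: field_simps)
  have "exp (- 4 * \<beta>\<^sup>2) / 4 = 1 / (4 * exp (4 * \<beta>\<^sup>2))" by (simp add: exp_minus field_simps)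
  also have "\<dots> \<le> 1 / (4 * Q2)" using Q2_up Q21 by (intro divide_left_mono) auto
  also have "\<dots> \<le> P" by (rule PQ)
  also have "P \<le> measure_pmf.prob Q {x. k * sqrt V \<le> Z x}"
    unfolding P_def
  proof (rule measure_pmf.finite_measure_mono[OF subsetI], simp_all only: mem_Collect_eq sets_measure_pmf UNIV_I)
    fix x assume x: "m / 2 < U x"
    have "exp (\<beta>\<^sup>2 / 8) < 2 * exp (l * Z x)" using x m_low unfolding U_def by simp
    also have "\<dots> \<le> exp 1 * exp (l * Z x)" using exp_ge_add_one_self[of "1::real"] by (intro mult_right_mono) auto
    also have "\<dots> = exp (l * Z x + 1)" by (simp add: exp_add)
    finally have "\<beta>\<^sup>2 / 8 < l * Z x + 1" by simp
    then have "(\<beta>\<^sup>2 / 8 - 1) / l < Z x" using l0 by (simp add: field_simps)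
    moreover have "(\<beta>\<^sup>2 / 8 - 1) / l = s * (\<beta> / 8 - 1 / \<beta>)" unfolding l_def using \<beta> s(1)
      by (simp add: field_simps power2_eq_square)
    moreover have "k * s \<le> s * (\<beta> / 8 - 1 / \<beta>)"
    proof -
      have "1 / \<beta> \<le> 1" using \<beta> by simp
      moreover have "\<beta> / 8 = k + 1" using \<beta>_def by simp
      ultimately have "k \<le> \<beta> / 8 - 1 / \<beta>" by linarith
      then show ?thesis using s by (simp add: mult.commute mult_left_mono)
    qed
    ultimately show "k * sqrt V \<le> Z x" unfolding s_def by linarith
  qed
  finally show ?thesis unfolding \<beta>_def .
qed

end

definition qv :: "(nat \<Rightarrow> nat pmf) \<Rightarrow> (nat \<Rightarrow> nat \<Rightarrow> real) \<Rightarrow> nat \<Rightarrow> nat \<Rightarrow> bool pmf" where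
  "qv sig b w n = sig w \<bind> (\<lambda>m. bernoulli_pmf (b n m))"
definition pv where "pv sig b w n = pmf (qv sig b w n) True"
definition gv :: "(nat \<Rightarrow> nat pmf) \<Rightarrow> (nat \<Rightarrow> nat \<Rightarrow> real) \<Rightarrow> nat \<Rightarrow> real \<Rightarrow> nat \<Rightarrow> bool \<Rightarrow> real" where
  "gv sig b w s n bb = s * ((if bb then 1 else 0) - pv sig b w n)"
definition ESv where "ESv sig b N w = (\<Sum>n\<in>{1..N}. pv sig b w n)"

lemma cen_inst: assumes "s = 1 \<or> s = -1" shows "cen {1..N} (qv sig b w) (gv sig b w s)"
proof
  show "finite {1..N}" by simp
  fix i assume "i \<in> {1..N}"
  show "measure_pmf.expectation (qv sig b w i) (gv sig b w s i) = 0"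
    by (simp add: E_bool gv_def pv_def algebra_simps)
  fix bb
  show "\<bar>gv sig b w s i bb\<bar> \<le> 1" using pmf_bool_range[of "qv sig b w i"] assms
    by (auto simp: gv_def pv_def abs_mult)
qed

lemma votes_Q: "votes sig b N w = cen.Q {1..N} (qv sig b w)"
proof -
  interpret c: cen "{1..N}" "qv sig b w" "gv sig b w 1" by (rule cen_inst) simp
  show ?thesis unfolding votes_def c.Q_def qv_def ..
qed

lemma numA_sum: "real (numA N x) = (\<Sum>n\<in>{1..N}. if x n then 1 else 0)"
proof -
  have "{n\<in>{1..N}. x n} = {1..N} \<inter> {n. x n}" by auto
  then show ?thesis unfolding numA_def by (simp add: sum.If_cases)
qed

lemma Z_eq: assumes "s = 1 \<or> s = -1"
  shows "cen.Z {1..N} (gv sig b w s) x = s * (real (numA N x) - ESv sig b N w)"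
proof -
  interpret c: cen "{1..N}" "qv sig b w" "gv sig b w s" by (rule cen_inst[OF assms])
  show ?thesis unfolding c.Z_def gv_def numA_sum ESv_def
    by (simp add: right_diff_distrib sum_distrib_left sum_subtractf)
qed

lemma V_eq: assumes "s = 1 \<or> s = -1"
  shows "cen.V {1..N} (qv sig b w) (gv sig b w s) = vote_var sig b N w"
proof -
  interpret c: cen "{1..N}" "qv sig b w" "gv sig b w s" by (rule cen_inst[OF assms])
  interpret c1: cen "{1..N}" "qv sig b w" "gv sig b w 1" by (rule cen_inst) simp
  have "c.V = c1.V" unfolding c.V_def c1.V_def gv_def using assms
    by (auto simp: power_mult_distrib)
  also have "c1.V = measure_pmf.expectation c1.Q (\<lambda>x. (c1.Z x)\<^sup>2)" by (rule c1.E_Z2[symmetric])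
  also have "\<dots> = vote_var sig b N w"
  proof -
    have EZ: "measure_pmf.expectation c1.Q c1.Z = 0" by (rule c1.E_Z)
    have "measure_pmf.expectation c1.Q (\<lambda>x. real (numA N x)) = measure_pmf.expectation c1.Q (\<lambda>x. c1.Z x + ESv sig b N w)"
      using Z_eq[of 1 N sig b w] by simp
    also have "\<dots> = measure_pmf.expectation c1.Q c1.Z + measure_pmf.expectation c1.Q (\<lambda>_. ESv sig b N w)"
      by (rule Bochner_Integration.integral_add) (rule c1.integQ)+
    also have "\<dots> = ESv sig b N w" using EZ by simp
    finally have "measure_pmf.expectation c1.Q (\<lambda>x. real (numA N x)) = ESv sig b N w" .
    then show ?thesis unfolding vote_var_def votes_Q[symmetric] c1.Q_def[symmetric]
      using Z_eq[of 1 N sig b w] by (simp add: c1.Q_def)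
  qed
  finally show ?thesis .
qed

lemma fA_eq: assumes "1 \<le> N" shows "fA sig b mu N w = ESv sig b N w / real N - mu"
proof -
  interpret c: cen "{1..N}" "qv sig b w" "gv sig b w 1" by (rule cen_inst) simp
  have "measure_pmf.expectation (votes sig b N w) (\<lambda>x. if x n then 1 else 0) = pv sig b w n" if "n \<in> {1..N}" for n
    unfolding votes_Q c.E_single[OF that, where f="\<lambda>bb. if bb then 1 else 0"] by (simp add: E_bool pv_def)
  then show ?thesis unfolding fA_def ESv_def by simp
qed

lemma fR_eq: assumes "1 \<le> N" shows "fR sig b mu N w = mu - ESv sig b N w / real N"
proof -
  interpret c: cen "{1..N}" "qv sig b w" "gv sig b w 1" by (rule cen_inst) simp
  have "measure_pmf.expectation (votes sig b N w) (\<lambda>x. 1 - (if x n then 1 else 0)) = 1 - pv sig b w n" if "n \<in> {1..N}" for n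
    unfolding votes_Q c.E_single[OF that, where f="\<lambda>bb. 1 - (if bb then 1 else 0)"] by (simp add: E_bool pv_def)
  then have "fR sig b mu N w = (1 / real N) * (\<Sum>n\<in>{1..N}. 1 - pv sig b w n) - (1 - mu)" unfolding fR_def by simp
  also have "\<dots> = mu - ESv sig b N w / real N" using assms unfolding ESv_def
    by (simp add: sum_subtractf field_simps)
  finally show ?thesis .
qed

lemma lam_sum: "lamA sig b mu N w + lamR sig b mu N w = 1"
proof -
  have "{x. \<not> mu * real N \<le> real (numA N x)} = space (measure_pmf (votes sig b N w)) - {x. mu * real N \<le> real (numA N x)}"
    by auto
  then have "lamR sig b mu N w = 1 - lamA sig b mu N w"
    unfolding lamA_def lamR_def by (simp only:) (rule measure_pmf.prob_compl, simp)
  then show ?thesis by simp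
qed

definition margin where
  "margin sig b mu alphaA K N w = (if w \<in> Lset K alphaA mu then fR sig b mu N w else fA sig b mu N w)"
definition err where
  "err sig b mu alphaA K N w = (if w \<in> Lset K alphaA mu then lamA sig b mu N w else lamR sig b mu N w)"

lemma tail_s:
  assumes "s = 1 \<or> s = -1" "0 \<le> l" "l \<le> 1"
  shows "measure_pmf.prob (votes sig b N w) {x. a \<le> s * (real (numA N x) - ESv sig b N w)} \<le> exp (l\<^sup>2 * real N - l * a)"
proof -
  interpret c: cen "{1..N}" "qv sig b w" "gv sig b w s" by (rule cen_inst[OF assms(1)])
  have "measure_pmf.prob (votes sig b N w) {x. a \<le> s * (real (numA N x) - ESv sig b N w)} = measure_pmf.prob c.Q {x. a \<le> c.Z x}"
    unfolding votes_Q using Z_eq[OF assms(1)] by simp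
  also have "\<dots> \<le> exp (l\<^sup>2 * c.V - l * a)" by (rule c.tail) (use assms in auto)
  also have "\<dots> \<le> exp (l\<^sup>2 * real N - l * a)" using c.V_bounds by (simp add: mult_left_mono)
  finally show ?thesis .
qed

lemma anti_s:
  assumes "s = 1 \<or> s = -1" "0 \<le> k" "4 * (8 * k + 8)\<^sup>2 \<le> vote_var sig b N w"
  shows "exp (- 4 * (8 * k + 8)\<^sup>2) / 4 \<le> measure_pmf.prob (votes sig b N w) {x. k * sqrt (vote_var sig b N w) \<le> s * (real (numA N x) - ESv sig b N w)}"
proof -
  interpret c: cen "{1..N}" "qv sig b w" "gv sig b w s" by (rule cen_inst[OF assms(1)])
  have "measure_pmf.prob (votes sig b N w) {x. k * sqrt (vote_var sig b N w) \<le> s * (real (numA N x) - ESv sig b N w)}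
     = measure_pmf.prob c.Q {x. k * sqrt c.V \<le> c.Z x}"
    unfolding votes_Q using Z_eq[OF assms(1)] V_eq[OF assms(1)] by simp
  moreover have "exp (- 4 * (8 * k + 8)\<^sup>2) / 4 \<le> measure_pmf.prob c.Q {x. k * sqrt c.V \<le> c.Z x}"
    by (rule c.anti) (use assms V_eq[OF assms(1)] in auto)
  ultimately show ?thesis by simp
qed

lemma err_upper:
  assumes N: "1 \<le> N" and l: "0 \<le> l" "l \<le> 1" and a: "a \<le> real N * margin sig b mu alphaA K N w"
  shows "err sig b mu alphaA K N w \<le> exp (l\<^sup>2 * real N - l * a)"
proof (cases "w \<in> Lset K alphaA mu")
  case True
  have "err sig b mu alphaA K N w = measure_pmf.prob (votes sig b N w) {x. mu * real N \<le> real (numA N x)}"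
    using True by (simp add: err_def lamA_def)
  also have "\<dots> \<le> measure_pmf.prob (votes sig b N w) {x. a \<le> 1 * (real (numA N x) - ESv sig b N w)}"
  proof (rule measure_pmf.finite_measure_mono[OF subsetI], simp_all only: mem_Collect_eq sets_measure_pmf UNIV_I)
    fix x assume "mu * real N \<le> real (numA N x)"
    moreover have "real N * margin sig b mu alphaA K N w = mu * real N - ESv sig b N w"
      using True N by (simp add: margin_def fR_eq field_simps)
    ultimately show "a \<le> 1 * (real (numA N x) - ESv sig b N w)" using a by (simp only: mult_1 mult_minus1; linarith)
  qed
  also have "\<dots> \<le> exp (l\<^sup>2 * real N - l * a)" by (rule tail_s) (use l in auto)
  finally show ?thesis .
next
  case False
  have "err sig b mu alphaA K N w = measure_pmf.prob (votes sig b N w) {x. \<not> mu * real N \<le> real (numA N x)}"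
    using False by (simp add: err_def lamR_def)
  also have "\<dots> \<le> measure_pmf.prob (votes sig b N w) {x. a \<le> -1 * (real (numA N x) - ESv sig b N w)}"
  proof (rule measure_pmf.finite_measure_mono[OF subsetI], simp_all only: mem_Collect_eq sets_measure_pmf UNIV_I)
    fix x assume "\<not> mu * real N \<le> real (numA N x)"
    moreover have "real N * margin sig b mu alphaA K N w = ESv sig b N w - mu * real N"
      using False N by (simp add: margin_def fA_eq field_simps)
    ultimately show "a \<le> -1 * (real (numA N x) - ESv sig b N w)" using a by (simp only: mult_1 mult_minus1; linarith)
  qed
  also have "\<dots> \<le> exp (l\<^sup>2 * real N - l * a)" by (rule tail_s) (use l in auto)
  finally show ?thesis .
qed

lemma err_lower:
  assumes N: "1 \<le> N" and l: "0 \<le> l" "l \<le> 1" and a: "real N * margin sig b mu alphaA K N w \<le> - a"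
  shows "1 - exp (l\<^sup>2 * real N - l * a) \<le> err sig b mu alphaA K N w"
proof (cases "w \<in> Lset K alphaA mu")
  case True
  have "lamR sig b mu N w = measure_pmf.prob (votes sig b N w) {x. \<not> mu * real N \<le> real (numA N x)}"
    by (simp add: lamR_def)
  also have "\<dots> \<le> measure_pmf.prob (votes sig b N w) {x. a \<le> -1 * (real (numA N x) - ESv sig b N w)}"
  proof (rule measure_pmf.finite_measure_mono[OF subsetI], simp_all only: mem_Collect_eq sets_measure_pmf UNIV_I)
    fix x assume "\<not> mu * real N \<le> real (numA N x)"
    moreover have "real N * margin sig b mu alphaA K N w = mu * real N - ESv sig b N w"
      using True N by (simp add: margin_def fR_eq field_simps)
    ultimately show "a \<le> -1 * (real (numA N x) - ESv sig b N w)" using a by (simp only: mult_1 mult_minus1; linarith)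
  qed
  also have "\<dots> \<le> exp (l\<^sup>2 * real N - l * a)" by (rule tail_s) (use l in auto)
  finally show ?thesis using True lam_sum[of sig b mu N w] by (simp add: err_def)
next
  case False
  have "lamA sig b mu N w = measure_pmf.prob (votes sig b N w) {x. mu * real N \<le> real (numA N x)}"
    by (simp add: lamA_def)
  also have "\<dots> \<le> measure_pmf.prob (votes sig b N w) {x. a \<le> 1 * (real (numA N x) - ESv sig b N w)}"
  proof (rule measure_pmf.finite_measure_mono[OF subsetI], simp_all only: mem_Collect_eq sets_measure_pmf UNIV_I)
    fix x assume "mu * real N \<le> real (numA N x)"
    moreover have "real N * margin sig b mu alphaA K N w = ESv sig b N w - mu * real N"
      using False N by (simp add: margin_def fA_eq field_simps)
    ultimately show "a \<le> 1 * (real (numA N x) - ESv sig b N w)" using a by (simp only: mult_1 mult_minus1; linarith)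
  qed
  also have "\<dots> \<le> exp (l\<^sup>2 * real N - l * a)" by (rule tail_s) (use l in auto)
  finally show ?thesis using False lam_sum[of sig b mu N w] by (simp add: err_def)
qed

lemma err_anti:
  assumes N: "1 \<le> N" and k: "0 \<le> k" "4 * (8 * k + 8)\<^sup>2 \<le> vote_var sig b N w"
    and d: "real N * margin sig b mu alphaA K N w < k * sqrt (vote_var sig b N w)"
  shows "exp (- 4 * (8 * k + 8)\<^sup>2) / 4 \<le> err sig b mu alphaA K N w"
proof (cases "w \<in> Lset K alphaA mu")
  case True
  have "exp (- 4 * (8 * k + 8)\<^sup>2) / 4 \<le> measure_pmf.prob (votes sig b N w) {x. k * sqrt (vote_var sig b N w) \<le> 1 * (real (numA N x) - ESv sig b N w)}"
    by (rule anti_s) (use k in auto)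
  also have "\<dots> \<le> measure_pmf.prob (votes sig b N w) {x. mu * real N \<le> real (numA N x)}"
  proof (rule measure_pmf.finite_measure_mono[OF subsetI], simp_all only: mem_Collect_eq sets_measure_pmf UNIV_I)
    fix x assume "k * sqrt (vote_var sig b N w) \<le> 1 * (real (numA N x) - ESv sig b N w)"
    moreover have "real N * margin sig b mu alphaA K N w = mu * real N - ESv sig b N w"
      using True N by (simp add: margin_def fR_eq field_simps)
    ultimately show "mu * real N \<le> real (numA N x)" using d by (simp only: mult_1 mult_minus1; linarith)
  qed
  finally show ?thesis using True by (simp add: err_def lamA_def)
next
  case False
  have "exp (- 4 * (8 * k + 8)\<^sup>2) / 4 \<le> measure_pmf.prob (votes sig b N w) {x. k * sqrt (vote_var sig b N w) \<le> -1 * (real (numA N x) - ESv sig b N w)}"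
    by (rule anti_s) (use k in auto)
  also have "\<dots> \<le> measure_pmf.prob (votes sig b N w) {x. \<not> mu * real N \<le> real (numA N x)}"
  proof (rule measure_pmf.finite_measure_mono[OF subsetI], simp_all only: mem_Collect_eq sets_measure_pmf UNIV_I)
    fix x assume "k * sqrt (vote_var sig b N w) \<le> -1 * (real (numA N x) - ESv sig b N w)"
    moreover have "real N * margin sig b mu alphaA K N w = ESv sig b N w - mu * real N"
      using False N by (simp add: margin_def fA_eq field_simps)
    ultimately show "\<not> mu * real N \<le> real (numA N x)" using d by (simp only: mult_1 mult_minus1; linarith)
  qed
  finally show ?thesis using False by (simp add: err_def lamR_def)
qed

lemma LH:
  assumes "\<forall>w\<in>{1..K}. alphaA w \<noteq> mu"
  shows "Lset K alphaA mu \<union> Hset K alphaA mu = {1..K}" "Lset K alphaA mu \<inter> Hset K alphaA mu = {}"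
    "finite (Lset K alphaA mu)" "finite (Hset K alphaA mu)"
  using assms by (auto simp: Lset_def Hset_def)

lemma fid_err:
  assumes prior: "set_pmf prior = {1..K}" and ne: "\<forall>w\<in>{1..K}. alphaA w \<noteq> mu"
  shows "fidelity prior sig b mu alphaA K N = 1 - (\<Sum>w\<in>{1..K}. pmf prior w * err sig b mu alphaA K N w)"
proof -
  note lh = LH[OF ne]
  have s1: "(\<Sum>w\<in>{1..K}. pmf prior w) = 1" by (rule sum_pmf_eq_1) (use prior in auto)
  have "(\<Sum>w\<in>{1..K}. pmf prior w) - (\<Sum>w\<in>{1..K}. pmf prior w * err sig b mu alphaA K N w)
      = (\<Sum>w\<in>{1..K}. pmf prior w * (1 - err sig b mu alphaA K N w))"
    by (simp add: sum_subtractf algebra_simps)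
  also have "\<dots> = (\<Sum>w\<in>Lset K alphaA mu \<union> Hset K alphaA mu. pmf prior w * (1 - err sig b mu alphaA K N w))"
    using lh by simp
  also have "\<dots> = (\<Sum>w\<in>Lset K alphaA mu. pmf prior w * (1 - err sig b mu alphaA K N w))
      + (\<Sum>w\<in>Hset K alphaA mu. pmf prior w * (1 - err sig b mu alphaA K N w))"
    using lh by (intro sum.union_disjoint) auto
  also have "\<dots> = fidelity prior sig b mu alphaA K N"
    unfolding fidelity_def
  proof (intro arg_cong2[where f="(+)"] sum.cong refl)
    fix w assume "w \<in> Lset K alphaA mu"
    then show "pmf prior w * (1 - err sig b mu alphaA K N w) = pmf prior w * lamR sig b mu N w"
      using lam_sum[of sig b mu N w] by (simp add: err_def)
  next
    fix w assume "w \<in> Hset K alphaA mu"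
    then have "w \<notin> Lset K alphaA mu" using lh by auto
    then show "pmf prior w * (1 - err sig b mu alphaA K N w) = pmf prior w * lamA sig b mu N w"
      using lam_sum[of sig b mu N w] by (simp add: err_def)
  qed
  finally show ?thesis using s1 by simp
qed

lemma err_range: "0 \<le> err sig b mu alphaA K N w" "err sig b mu alphaA K N w \<le> 1"
  by (auto simp: err_def lamA_def lamR_def)

lemma excess_le:
  assumes ne: "\<forall>w\<in>{1..K}. alphaA w \<noteq> mu" and w: "w \<in> {1..K}"
  shows "excess sig b mu alphaA K N \<le> margin sig b mu alphaA K N w"
proof (cases "w \<in> Lset K alphaA mu")
  case True
  have "Min ((\<lambda>w. fR sig b mu N w) ` Lset K alphaA mu) \<le> fR sig b mu N w"
    using True LH[OF ne] by (intro Min_le) auto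
  then show ?thesis using True by (simp add: excess_def margin_def)
next
  case False
  then have "w \<in> Hset K alphaA mu" using LH[OF ne] w by auto
  then have "Min ((\<lambda>w. fA sig b mu N w) ` Hset K alphaA mu) \<le> fA sig b mu N w"
    using LH[OF ne] by (intro Min_le) auto
  then show ?thesis using False by (simp add: excess_def margin_def)
qed

lemma excess_att:
  assumes ne: "\<forall>w\<in>{1..K}. alphaA w \<noteq> mu" and L: "Lset K alphaA mu \<noteq> {}" and H: "Hset K alphaA mu \<noteq> {}"
  shows "\<exists>w\<in>{1..K}. margin sig b mu alphaA K N w = excess sig b mu alphaA K N"
proof -
  have mL: "Min ((\<lambda>w. fR sig b mu N w) ` Lset K alphaA mu) \<in> (\<lambda>w. fR sig b mu N w) ` Lset K alphaA mu"
    using L LH[OF ne] by (intro Min_in) auto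
  have mH: "Min ((\<lambda>w. fA sig b mu N w) ` Hset K alphaA mu) \<in> (\<lambda>w. fA sig b mu N w) ` Hset K alphaA mu"
    using H LH[OF ne] by (intro Min_in) auto
  show ?thesis
  proof (cases "Min ((\<lambda>w. fA sig b mu N w) ` Hset K alphaA mu) \<le> Min ((\<lambda>w. fR sig b mu N w) ` Lset K alphaA mu)")
    case True
    from mH obtain w where w: "w \<in> Hset K alphaA mu" "Min ((\<lambda>w. fA sig b mu N w) ` Hset K alphaA mu) = fA sig b mu N w" by auto
    then have "w \<notin> Lset K alphaA mu" using LH[OF ne] by auto
    then show ?thesis using w True LH[OF ne] by (intro bexI[of _ w]) (auto simp: margin_def excess_def)
  next
    case False
    from mL obtain w where w: "w \<in> Lset K alphaA mu" "Min ((\<lambda>w. fR sig b mu N w) ` Lset K alphaA mu) = fR sig b mu N w" by auto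
    then show ?thesis using w False LH[OF ne] by (intro bexI[of _ w]) (auto simp: margin_def excess_def)
  qed
qed

lemma margin_lt1:
  assumes "1 \<le> N" "0 < mu" "mu < 1"
  shows "margin sig b mu alphaA K N w < 1"
proof -
  have p: "0 \<le> pv sig b w n \<and> pv sig b w n \<le> 1" for n by (simp add: pv_def pmf_le_1)
  have "0 \<le> ESv sig b N w" unfolding ESv_def using p by (simp add: sum_nonneg)
  moreover have "ESv sig b N w \<le> real N" unfolding ESv_def using p sum_mono[of "{1..N}" "pv sig b w" "\<lambda>_. 1"] by simp
  ultimately have h: "0 \<le> ESv sig b N w / real N" "ESv sig b N w / real N \<le> 1"
    using assms(1) by (auto simp: divide_le_eq_1)
  show ?thesis
  proof (cases "w \<in> Lset K alphaA mu")
    case True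
    then show ?thesis using h assms by (simp add: margin_def fR_eq)
  next
    case False
    then have "margin sig b mu alphaA K N w = ESv sig b N w / real N - mu" using assms by (simp add: margin_def fA_eq)
    then show ?thesis using h assms by linarith
  qed
qed

theorem theorem7:
  fixes K M B :: nat
    and mu :: real
    and prior :: "nat pmf"
    and sig :: "nat \<Rightarrow> nat pmf"
    and alphaA :: "nat \<Rightarrow> real"
    and v :: "nat \<Rightarrow> nat \<Rightarrow> nat \<Rightarrow> bool \<Rightarrow> nat"
    and beta :: "nat \<Rightarrow> nat \<Rightarrow> nat \<Rightarrow> real"
  assumes mu: "0 < mu" "mu < 1"
    and prior: "set_pmf prior = {1..K}"
    and sig: "\<forall>w\<in>{1..K}. set_pmf (sig w) \<subseteq> {1..M}"
    and sd: "stoch_dom K sig"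
    and alpha_ne: "\<forall>w\<in>{1..K}. alphaA w \<noteq> mu"
    and L_ne: "Lset K alphaA mu \<noteq> {}"
    and H_ne: "Hset K alphaA mu \<noteq> {}"
    and v_bound: "\<forall>N\<ge>1. \<forall>n\<in>{1..N}. \<forall>w\<in>{1..K}. \<forall>r. v N n w r \<le> B"
    and v_A_inc: "\<forall>N\<ge>1. \<forall>n\<in>{1..N}. \<forall>w\<in>{1..K}. \<forall>w'\<in>{1..K}. w < w' \<longrightarrow> v N n w True < v N n w' True"
    and v_R_dec: "\<forall>N\<ge>1. \<forall>n\<in>{1..N}. \<forall>w\<in>{1..K}. \<forall>w'\<in>{1..K}. w < w' \<longrightarrow> v N n w False > v N n w' False"
    and pref_count: "\<forall>N\<ge>1. \<forall>w\<in>{1..K}.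
        int (card {n\<in>{1..N}. v N n w False > v N n w True}) = \<lfloor>(1 - alphaA w) * real N\<rfloor>"
    and beta: "\<forall>N\<ge>1. \<forall>n\<in>{1..N}. \<forall>m\<in>{1..M}. 0 \<le> beta N n m \<and> beta N n m \<le> 1"
  shows
    "(liminf (\<lambda>N. ereal (sqrt (real N) * excess sig (beta N) mu alphaA K N)) = \<infinity>
        \<longrightarrow> (\<lambda>N. fidelity prior sig (beta N) mu alphaA K N) \<longlonglongrightarrow> 1)
   \<and> (\<forall>(eta::real) (NN::nat set). eta < 0 \<and> infinite NN \<and>
        (\<forall>N\<in>NN. sqrt (real N) * excess sig (beta N) mu alphaA K N \<le> eta)
        \<longrightarrow> (\<exists>Neta::real. Neta > 0 \<and> (\<exists>c::real. c > 0 \<and>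
              (\<forall>N\<in>NN. real N > Neta \<longrightarrow> fidelity prior sig (beta N) mu alphaA K N \<le> 1 - c))))
   \<and> (\<forall>(eta::real) (NN::nat set) (psi::real). eta \<ge> 0 \<and> infinite NN \<and>
        (\<forall>N\<in>NN. sqrt (real N) * excess sig (beta N) mu alphaA K N \<le> eta) \<and>
        psi > 0 \<and> (\<forall>N\<in>NN. \<forall>w\<in>{1..K}. vote_var sig (beta N) N w \<ge> psi * real N)
        \<longrightarrow> (\<exists>Neta::real. Neta > 0 \<and> (\<exists>c::real. c > 0 \<and>
              (\<forall>N\<in>NN. real N > Neta \<longrightarrow> fidelity prior sig (beta N) mu alphaA K N \<le> 1 - c))))"
proof -
  define F where "F N = excess sig (beta N) mu alphaA K N" for N
  define fid where "fid N = fidelity prior sig (beta N) mu alphaA K N" for N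
  define er where "er N w = err sig (beta N) mu alphaA K N w" for N w
  define mg where "mg N w = margin sig (beta N) mu alphaA K N w" for N w
  have K1: "1 \<le> K" using H_ne by (auto simp: Hset_def)
  define pmin where "pmin = Min (pmf prior ` {1..K})"
  have pmin_pos: "0 < pmin" unfolding pmin_def using K1 prior
    by (subst Min_gr_iff) (auto simp: set_pmf_eq' )
  have pmin_le: "pmin \<le> pmf prior w" if "w \<in> {1..K}" for w
    unfolding pmin_def using that by (intro Min_le) auto
  have fid_eq: "fid N = 1 - (\<Sum>w\<in>{1..K}. pmf prior w * er N w)" for N
    unfolding fid_def er_def by (rule fid_err[OF prior alpha_ne])
  have fid_le: "fid N \<le> 1 - pmin * er N w" if w: "w \<in> {1..K}" for N w
  proof -
    have "pmin * er N w \<le> pmf prior w * er N w"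
      using pmin_le[OF w] err_range unfolding er_def by (intro mult_right_mono) auto
    also have "\<dots> \<le> (\<Sum>w\<in>{1..K}. pmf prior w * er N w)"
      using w by (intro member_le_sum) (auto simp: er_def err_range)
    finally show ?thesis unfolding fid_eq by simp
  qed
  have fid_ge: "1 - e \<le> fid N" if "\<forall>w\<in>{1..K}. er N w \<le> e" for N e
  proof -
    have "(\<Sum>w\<in>{1..K}. pmf prior w * er N w) \<le> (\<Sum>w\<in>{1..K}. pmf prior w * e)"
      using that by (intro sum_mono mult_left_mono) auto
    also have "\<dots> = e" using sum_pmf_eq_1[of "{1..K}" prior] prior by (simp add: sum_distrib_right[symmetric])
    finally show ?thesis unfolding fid_eq by simp
  qed
  have fid_le1: "fid N \<le> 1" for N
  proof -
    have "0 \<le> pmin * er N 1" using pmin_pos err_range[of sig "beta N" mu alphaA K N 1] unfolding er_def by simp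
    then show ?thesis using fid_le[of 1 N] K1 by simp
  qed
  have F_le: "F N \<le> mg N w" if "w \<in> {1..K}" for N w
    unfolding F_def mg_def by (rule excess_le[OF alpha_ne that])
  have F_att: "\<exists>w\<in>{1..K}. mg N w = F N" for N
    unfolding F_def mg_def by (rule excess_att[OF alpha_ne L_ne H_ne])
  have F_lt1: "F N < 1" if "1 \<le> N" for N
  proof -
    have "F N \<le> mg N 1" using F_le[of 1 N] K1 by simp
    moreover have "mg N 1 < 1" unfolding mg_def by (rule margin_lt1[OF that mu])
    ultimately show ?thesis by simp
  qed
  have sqN: "real N * x = sqrt (real N) * (sqrt (real N) * x)" for N x
    by (simp add: mult.assoc[symmetric])

  have part1: "(\<lambda>N. fid N) \<longlonglongrightarrow> 1"
    if lim: "liminf (\<lambda>N. ereal (sqrt (real N) * F N)) = \<infinity>"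
  proof -
    define t where "t N = sqrt (real N) * F N" for N
    have "((\<lambda>N. ereal (t N)) \<longlongrightarrow> \<infinity>) sequentially"
      using Liminf_PInfty[of sequentially "\<lambda>N. ereal (t N)"] lim unfolding t_def by simp
    then have ev: "\<forall>r. eventually (\<lambda>N. r < t N) sequentially"
      unfolding tendsto_PInfty by simp
    then have tlim: "filterlim t at_top sequentially"
      by (simp add: filterlim_at_top_dense)
    have e0: "((\<lambda>x::real. exp (- (x\<^sup>2 / 4))) \<longlongrightarrow> 0) at_top" by real_asymp
    have low: "(\<lambda>N. 1 - exp (- ((t N)\<^sup>2 / 4))) \<longlonglongrightarrow> 1"
      using tendsto_diff[OF tendsto_const[of 1] filterlim_compose[OF e0 tlim]] by (simp add: o_def)
    have evlow: "eventually (\<lambda>N. 1 - exp (- ((t N)\<^sup>2 / 4)) \<le> fid N) sequentially"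
      using eventually_conj[OF ev[rule_format, of 0] eventually_ge_at_top[of 1]]
    proof (rule eventually_mono)
      fix N :: nat assume N: "0 < t N \<and> 1 \<le> N"
      have sN: "0 < sqrt (real N)" using N by simp
      define l where "l = t N / (2 * sqrt (real N))"
      have l0: "0 \<le> l" using N sN l_def by simp
      have "t N \<le> 2 * sqrt (real N)"
      proof -
        have "t N \<le> sqrt (real N) * 1" unfolding t_def using F_lt1[of N] N sN
          by (intro mult_left_mono) auto
        then show ?thesis using sN by linarith
      qed
      then have l1: "l \<le> 1" using sN unfolding l_def by (simp add: divide_le_eq)
      show "1 - exp (- ((t N)\<^sup>2 / 4)) \<le> fid N"
      proof (rule fid_ge, intro ballI)
        fix w assume w: "w \<in> {1..K}"
        have "er N w \<le> exp (l\<^sup>2 * real N - l * (sqrt (real N) * t N))"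
          unfolding er_def
        proof (rule err_upper[OF _ l0 l1])
          show "1 \<le> N" using N by simp
          have "sqrt (real N) * t N = real N * F N" unfolding t_def using sqN by simp
          also have "\<dots> \<le> real N * margin sig (beta N) mu alphaA K N w"
            using F_le[OF w, of N] unfolding mg_def by (intro mult_left_mono) auto
          finally show "sqrt (real N) * t N \<le> real N * margin sig (beta N) mu alphaA K N w" .
        qed
        also have "l\<^sup>2 * real N - l * (sqrt (real N) * t N) = - ((t N)\<^sup>2 / 4)"
          using sN unfolding l_def by (simp add: field_simps power2_eq_square)
        finally show "er N w \<le> exp (- ((t N)\<^sup>2 / 4))" .
      qed
    qed
    have evup: "eventually (\<lambda>N. fid N \<le> 1) sequentially" using fid_le1 by simp
    show ?thesis by (rule tendsto_sandwich[OF evlow evup low tendsto_const])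
  qed

  have part2: "\<exists>Neta::real. Neta > 0 \<and> (\<exists>c::real. c > 0 \<and> (\<forall>N\<in>NN. real N > Neta \<longrightarrow> fid N \<le> 1 - c))"
    if eta: "eta < 0" and hyp: "\<forall>N\<in>NN. sqrt (real N) * F N \<le> eta" for eta :: real and NN
  proof (intro exI conjI ballI impI)
    have "0 \<le> eta\<^sup>2 / 4" by simp
    then show "(0::real) < eta\<^sup>2 / 4 + 1" by linarith
    have "exp (- (eta\<^sup>2 / 4)) < 1" using eta by simp
    then show "0 < pmin * (1 - exp (- (eta\<^sup>2 / 4)))" using pmin_pos by simp
    fix N assume NN: "N \<in> NN" and Nb: "eta\<^sup>2 / 4 + 1 < real N"
    have "0 \<le> eta\<^sup>2 / 4" by simp
    then have "1 < real N" using Nb by linarith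
    then have N1: "1 \<le> N" by simp
    have sN: "0 < sqrt (real N)" using N1 by simp
    obtain w where w: "w \<in> {1..K}" "mg N w = F N" using F_att by blast
    define l where "l = - eta / (2 * sqrt (real N))"
    have l0: "0 \<le> l" unfolding l_def using eta sN by (simp add: divide_nonpos_pos)
    have "eta\<^sup>2 \<le> (2 * sqrt (real N))\<^sup>2" using Nb N1 by (simp add: power_mult_distrib)
    then have "(- eta)\<^sup>2 \<le> (2 * sqrt (real N))\<^sup>2" by simp
    then have "- eta \<le> 2 * sqrt (real N)" by (rule power2_le_imp_le) (use sN in auto)
    then have l1: "l \<le> 1" unfolding l_def using sN by (simp add: le_divide_eq divide_le_eq)
    have "1 - exp (l\<^sup>2 * real N - l * (- (eta * sqrt (real N)))) \<le> er N w"
      unfolding er_def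
    proof (rule err_lower[OF N1 l0 l1])
      have "real N * margin sig (beta N) mu alphaA K N w = sqrt (real N) * (sqrt (real N) * F N)"
        using w sqN unfolding mg_def by simp
      also have "\<dots> \<le> sqrt (real N) * eta" using hyp NN sN by (intro mult_left_mono) auto
      finally show "real N * margin sig (beta N) mu alphaA K N w \<le> - (- (eta * sqrt (real N)))" by (simp add: mult.commute)
    qed
    also have "l\<^sup>2 * real N - l * (- (eta * sqrt (real N))) = - (eta\<^sup>2 / 4)"
      using sN unfolding l_def by (simp add: field_simps power2_eq_square)
    finally have "1 - exp (- (eta\<^sup>2 / 4)) \<le> er N w" .
    then have "pmin * (1 - exp (- (eta\<^sup>2 / 4))) \<le> pmin * er N w" using pmin_pos by simp
    then show "fid N \<le> 1 - pmin * (1 - exp (- (eta\<^sup>2 / 4)))" using fid_le[OF w(1), of N] by simp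
  qed

  have part3: "\<exists>Neta::real. Neta > 0 \<and> (\<exists>c::real. c > 0 \<and> (\<forall>N\<in>NN. real N > Neta \<longrightarrow> fid N \<le> 1 - c))"
    if eta: "0 \<le> eta" and hyp: "\<forall>N\<in>NN. sqrt (real N) * F N \<le> eta" and psi: "0 < psi"
      and var: "\<forall>N\<in>NN. \<forall>w\<in>{1..K}. vote_var sig (beta N) N w \<ge> psi * real N" for eta psi :: real and NN
  proof -
    define k where "k = eta / sqrt psi + 1"
    have k0: "0 \<le> k" using eta psi k_def by simp
    define C where "C = 4 * (8 * k + 8)\<^sup>2"
    show ?thesis
    proof (intro exI conjI ballI impI)
      have "0 \<le> C / psi" using psi C_def by simp
      then show "(0::real) < C / psi + 1" by linarith
      show "0 < pmin * (exp (- 4 * (8 * k + 8)\<^sup>2) / 4)" using pmin_pos by simp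
      fix N assume NN: "N \<in> NN" and Nb: "C / psi + 1 < real N"
      have C0: "0 \<le> C" using C_def by simp
      have "0 \<le> C / psi" using C0 psi by simp
      then have "1 < real N" using Nb by linarith
      then have N1: "1 \<le> N" by simp
      have sN: "0 < sqrt (real N)" using N1 by simp
      obtain w where w: "w \<in> {1..K}" "mg N w = F N" using F_att by blast
      define Vv where "Vv = vote_var sig (beta N) N w"
      have Vv: "psi * real N \<le> Vv" using var NN w unfolding Vv_def by auto
      have "C < psi * real N" using Nb psi by (simp add: field_simps)
      then have CV: "C \<le> Vv" using Vv by simp
      have sV: "sqrt psi * sqrt (real N) \<le> sqrt Vv" using Vv by (simp add: real_sqrt_mult[symmetric])
      have "0 < sqrt psi * sqrt (real N)" using psi sN by simp
      then have sV0: "0 < sqrt Vv" using sV by linarith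
      have "exp (- 4 * (8 * k + 8)\<^sup>2) / 4 \<le> er N w"
        unfolding er_def
      proof (rule err_anti[OF N1 k0])
        show "4 * (8 * k + 8)\<^sup>2 \<le> vote_var sig (beta N) N w" using CV C_def Vv_def by simp
        have "real N * margin sig (beta N) mu alphaA K N w = sqrt (real N) * (sqrt (real N) * F N)"
          using w sqN unfolding mg_def by simp
        also have "\<dots> \<le> sqrt (real N) * eta" using hyp NN sN by (intro mult_left_mono) auto
        also have "\<dots> = eta / sqrt psi * (sqrt psi * sqrt (real N))" using psi by simp
        also have "\<dots> \<le> eta / sqrt psi * sqrt Vv" using sV eta psi by (intro mult_left_mono) auto
        also have "\<dots> < k * sqrt Vv" using sV0 k_def by (simp add: distrib_right)
        finally show "real N * margin sig (beta N) mu alphaA K N w < k * sqrt (vote_var sig (beta N) N w)"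
          unfolding Vv_def .
      qed
      then have "pmin * (exp (- 4 * (8 * k + 8)\<^sup>2) / 4) \<le> pmin * er N w" using pmin_pos by simp
      then show "fid N \<le> 1 - pmin * (exp (- 4 * (8 * k + 8)\<^sup>2) / 4)" using fid_le[OF w(1), of N] by simp
    qed
  qed

  show ?thesis
    unfolding F_def[symmetric] fid_def[symmetric]
  proof (intro conjI allI impI)
    assume "liminf (\<lambda>N. ereal (sqrt (real N) * F N)) = \<infinity>"
    then show "fid \<longlonglongrightarrow> 1" using part1 by simp
  next
    fix eta :: real and NN :: "nat set"
    assume h: "eta < 0 \<and> infinite NN \<and> (\<forall>N\<in>NN. sqrt (real N) * F N \<le> eta)"
    show "\<exists>Neta>0. \<exists>c>0. \<forall>N\<in>NN. Neta < real N \<longrightarrow> fid N \<le> 1 - c"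
      using part2[of eta NN] h by blast
  next
    fix eta psi :: real and NN :: "nat set"
    assume h: "0 \<le> eta \<and> infinite NN \<and> (\<forall>N\<in>NN. sqrt (real N) * F N \<le> eta) \<and> 0 < psi \<and>
        (\<forall>N\<in>NN. \<forall>w\<in>{1..K}. psi * real N \<le> vote_var sig (beta N) N w)"
    show "\<exists>Neta>0. \<exists>c>0. \<forall>N\<in>NN. Neta < real N \<longrightarrow> fid N \<le> 1 - c"
      using part3[of eta NN psi] h by blast
  qed
qed

end
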